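(* For every $n\ge 1$ and every $\alpha'\in\dot\Delta'$ we have $r_{\alpha'}(\dot{\mathcal S}_n)\subset \dot{\mathcal S}'_{n+1}$ (and, symmetrically, $r_{\alpha}(\dot{\mathcal S}'_n)\subset \dot{\mathcal S}_{n+1}$ for every $\alpha\in\dot\Delta$).
   Context: Let $\tau=(1+\sqrt5)/2$, $\tau'=(1-\sqrt5)/2$. Identify $\mathbb{R}^4$ (standard dot product) with the quaternions. Let $\Delta\subset\mathbb{R}^4$ be the set of 120 vectors consisting of: the 8 vectors obtained from $(\pm1,0,0,0)$ by permuting coordinates; the 16 vectors $\frac12(\pm1,\pm1,\pm1,\pm1)$; and the 96 vectors obtained from $\frac12(0,\pm1,\pm\tau',\pm\tau)$ (all sign choices) by even permutations of the coordinates. Let $\Delta'$ be the image of $\Delta$ under the Galois conjugation $\tau\leftrightarrow\tau'$ applied to each coordinate. Put $K=\Delta\cap\Delta'$, $\dot\Delta=\Delta\setminus K$, $\dot\Delta'=\Delta'\setminus K$. For a unit vector $a$, $r_a(x)=x-2(x\cdot a)a$. Let $\mathbb F_4=\mathbb{Z}[\tau]/2\mathbb{Z}[\tau]$ (elements $\bar0,\bar1,\bar\tau,\bar{\tau'}$) and for $y\in\mathbb{Z}[\tau]^4$ let $\bar y\in\mathbb F_4^4$ be its coordinatewise reduction. Let $\dot A\subset\mathbb F_4^4$ be the 12 vectors obtained from $(\bar0,\bar1,\bar{\tau'},\bar\tau)$ by even permutations of coordinates, and $\dot A'$ the 12 vectors obtained from it by odd permutations. For $n\ge1$, $\dot{\mathcal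 S}_n=\{x\in 2^{-n}\mathbb{Z}[\tau]^4: x\cdot x=1,\ \overline{2^nx}\in\dot A\}$ and $\dot{\mathcal S}'_n=\{x\in 2^{-n}\mathbb{Z}[\tau]^4: x\cdot x=1,\ \overline{2^nx}\in\dot A'\}$. *)

theory Defs
  imports "HOL-Analysis.Analysis" "HOL-Combinatorics.Permutations"
begin

definition tau :: real where "tau = (1 + sqrt 5) / 2"
definition tau' :: real where "tau' = (1 - sqrt 5) / 2"

definition galconj :: "real \<Rightarrow> real" where
  "galconj x = (THE y. \<exists>a b :: rat. x = of_rat a + of_rat b * sqrt 5 \<and> y = of_rat a - of_rat b * sqrt 5)"

definition permvec :: "(4 \<Rightarrow> 4) \<Rightarrow> real^4 \<Rightarrow> real^4" where
  "permvec p v = (\<chi> i. v $ (p i))"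

definition Delta :: "(real^4) set" where
  "Delta =
     {x. \<exists>i s. s \<in> {1, -1} \<and> x = (\<chi> j. if j = i then s else 0)}
   \<union> {x. \<forall>i. x $ i \<in> {1/2, -1/2}}
   \<union> {x. \<exists>p s. p permutes (UNIV :: 4 set) \<and> evenperm p \<and> (\<forall>i. s i \<in> {1::real, -1}) \<and>
          x = permvec p (\<chi> i. s i * (vector [0, 1/2, tau'/2, tau/2] :: real^4) $ i)}"

definition Delta' :: "(real^4) set" where
  "Delta' = (\<lambda>x. \<chi> i. galconj (x $ i)) ` Delta"

definition Kset :: "(real^4) set" where "Kset = Delta \<inter> Delta'"
definition DeltaDot :: "(real^4) set" where "DeltaDot = Delta - Kset"
definition DeltaDot' :: "(real^4) set" where "DeltaDot' = Delta' - Kset"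

definition reflect :: "real^4 \<Rightarrow> real^4 \<Rightarrow> real^4" where
  "reflect a x = x - (2 * (x \<bullet> a)) *\<^sub>R a"

definition Ztau :: "real set" where
  "Ztau = {of_int a + of_int b * tau | a b. True}"

text \<open>Congruence modulo 2 Z[tau]: equality of reductions in F_4 = Z[tau]/2Z[tau].\<close>
definition cong2 :: "real \<Rightarrow> real \<Rightarrow> bool" where
  "cong2 u v \<longleftrightarrow> u \<in> Ztau \<and> v \<in> Ztau \<and> (\<exists>z\<in>Ztau. u - v = 2 * z)"

definition baseA :: "real^4" where "baseA = vector [0, 1, tau', tau]"

text \<open>reduction of y lies in A-dot (even perms) / A-dot' (odd perms)\<close>
definition inAdot :: "real^4 \<Rightarrow> bool" where
  "inAdot y \<longleftrightarrow> (\<exists>p. p permutes (UNIV :: 4 set) \<and> evenperm p \<and>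
       (\<forall>i. cong2 (y $ i) (permvec p baseA $ i)))"
definition inAdot' :: "real^4 \<Rightarrow> bool" where
  "inAdot' y \<longleftrightarrow> (\<exists>p. p permutes (UNIV :: 4 set) \<and> \<not> evenperm p \<and>
       (\<forall>i. cong2 (y $ i) (permvec p baseA $ i)))"

definition Sdot :: "nat \<Rightarrow> (real^4) set" where
  "Sdot n = {x. (\<forall>i. (2::real)^n * x $ i \<in> Ztau) \<and> x \<bullet> x = 1 \<and> inAdot ((2::real)^n *\<^sub>R x)}"
definition Sdot' :: "nat \<Rightarrow> (real^4) set" where
  "Sdot' n = {x. (\<forall>i. (2::real)^n * x $ i \<in> Ztau) \<and> x \<bullet> x = 1 \<and> inAdot' ((2::real)^n *\<^sub>R x)}"

end

theory Submission
  imports Defs "HOL-Library.Product_Plus" "HOL-Computational_Algebra.Primes"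
begin


lemma prime5: "prime (5::nat)"
proof -
  have e: "{2..<5::nat} = {2,3,4}" by auto
  show ?thesis unfolding prime_nat_iff' e by simp
qed

lemma sqrt5_irr: "sqrt (5::real) \<notin> \<rat>"
proof
  assume "sqrt (5::real) \<in> \<rat>"
  then have "sqrt (real (5::nat)) \<in> \<rat>" by simp
  then obtain m n :: nat
    where n: "n \<noteq> 0" and sqrt_rat: "\<bar>sqrt (real (5::nat))\<bar> = m / n" and "coprime m n"
    by (rule Rats_abs_nat_div_natE)
  from n and sqrt_rat have "m = \<bar>sqrt (real (5::nat))\<bar> * n" by simp
  then have "real (m\<^sup>2) = (sqrt (real (5::nat)))\<^sup>2 * real (n\<^sup>2)" by (auto simp add: power2_eq_square)
  also have "(sqrt (real (5::nat)))\<^sup>2 = real (5::nat)" by simp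
  finally have eq: "m\<^sup>2 = 5 * n\<^sup>2" by (metis of_nat_eq_iff of_nat_mult)
  then have "(5::nat) dvd m\<^sup>2" ..
  with prime5 have dvd_m: "5 dvd m" by (rule prime_dvd_power)
  then obtain k where "m = 5 * k" ..
  with eq have "5 * n\<^sup>2 = 5\<^sup>2 * k\<^sup>2" by algebra
  then have "n\<^sup>2 = 5 * k\<^sup>2" by (simp add: power2_eq_square)
  then have "(5::nat) dvd n\<^sup>2" ..
  with prime5 have "5 dvd n" by (rule prime_dvd_power)
  with dvd_m have "5 dvd gcd m n" by (rule gcd_greatest)
  with \<open>coprime m n\<close> show False by simp
qed

lemma rat_sqrt5_unique:
  assumes "of_rat a + of_rat b * sqrt 5 = (of_rat c + of_rat d * sqrt 5 :: real)"
  shows "a = c \<and> b = d"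
proof (cases "b = d")
  case True
  then show ?thesis using assms by simp
next
  case False
  have "(of_rat b - of_rat d) * sqrt 5 = (of_rat c - of_rat a :: real)" using assms by (simp add: algebra_simps)
  then have "sqrt 5 = of_rat ((c - a) / (b - d))" using False
    by (simp add: of_rat_divide of_rat_diff field_simps)
  then have "sqrt (5::real) \<in> \<rat>" by (metis Rats_of_rat)
  with sqrt5_irr show ?thesis by simp
qed

lemma galconj_eq:
  assumes "x = of_rat a + of_rat b * sqrt 5"
  shows "galconj x = of_rat a - of_rat b * sqrt 5"
  unfolding galconj_def
proof (rule the_equality)
  show "\<exists>a' b'. x = of_rat a' + of_rat b' * sqrt 5 \<and> of_rat a - of_rat b * sqrt 5 = of_rat a' - of_rat b' * sqrt 5"
    using assms by blast
next
  fix y assume "\<exists>a' b'. x = of_rat a' + of_rat b' * sqrt 5 \<and> y = of_rat a' - of_rat b' * sqrt 5"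
  then obtain a' b' where "x = of_rat a' + of_rat b' * sqrt 5" "y = of_rat a' - of_rat b' * sqrt 5" by blast
  note h = this
  have "of_rat a + of_rat b * sqrt 5 = (of_rat a' + of_rat b' * sqrt 5 :: real)" using assms h(1) by simp
  from rat_sqrt5_unique[OF this] have "a = a'" "b = b'" by auto
  then show "y = of_rat a - of_rat b * sqrt 5" using h(2) by simp
qed

lemma galconj_rat: "galconj (of_rat r) = of_rat r"
  using galconj_eq[of "of_rat r" r 0] by simp

lemma gc0: "galconj 0 = 0" using galconj_rat[of 0] by simp
lemma gc1: "galconj 1 = 1" using galconj_rat[of 1] by simp
lemma gcm1: "galconj (-1) = -1" using galconj_rat[of "-1"] by (simp add: of_rat_minus)
lemma gch: "galconj (1/2) = 1/2" using galconj_rat[of "1/2"] by (simp add: of_rat_divide)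
lemma gcmh: "galconj (-(1/2)) = -(1/2)" using galconj_rat[of "-1/2"] by (simp add: of_rat_divide of_rat_minus)

lemma galconj_eq':
  assumes "x = a + b * sqrt 5" "a \<in> \<rat>" "b \<in> \<rat>"
  shows "galconj x = a - b * sqrt 5"
proof -
  obtain a' where a': "a = of_rat a'" using assms(2) Rats_cases by blast
  obtain b' where b': "b = of_rat b'" using assms(3) Rats_cases by blast
  show ?thesis using galconj_eq[of x a' b'] assms(1) unfolding a' b' by blast
qed

lemma q4: "(1/4::real) \<in> \<rat>" "(-1/4::real) \<in> \<rat>" by simp_all

lemma gt1: "galconj (tau'/2) = tau/2"
proof -
  have e: "tau'/2 = 1/4 + (-1/4) * sqrt 5" unfolding tau'_def by (simp add: field_simps)
  have "galconj (tau'/2) = 1/4 - (-1/4) * sqrt 5" by (rule galconj_eq'[OF e q4(1) q4(2)])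
  also have "\<dots> = tau/2" unfolding tau_def by (simp add: field_simps)
  finally show ?thesis .
qed
lemma gt2: "galconj (-(tau'/2)) = -(tau/2)"
proof -
  have e: "-(tau'/2) = (-1/4) + (1/4) * sqrt 5" unfolding tau'_def by (simp add: field_simps)
  have "galconj (-(tau'/2)) = (-1/4) - (1/4) * sqrt 5" by (rule galconj_eq'[OF e q4(2) q4(1)])
  also have "\<dots> = -(tau/2)" unfolding tau_def by (simp add: field_simps)
  finally show ?thesis .
qed
lemma gt3: "galconj (tau/2) = tau'/2"
proof -
  have e: "tau/2 = 1/4 + (1/4) * sqrt 5" unfolding tau_def by (simp add: field_simps)
  have "galconj (tau/2) = 1/4 - (1/4) * sqrt 5" by (rule galconj_eq'[OF e q4(1) q4(1)])
  also have "\<dots> = tau'/2" unfolding tau'_def by (simp add: field_simps)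
  finally show ?thesis .
qed
lemma gt4: "galconj (-(tau/2)) = -(tau'/2)"
proof -
  have e: "-(tau/2) = (-1/4) + (-1/4) * sqrt 5" unfolding tau_def by (simp add: field_simps)
  have "galconj (-(tau/2)) = (-1/4) - (-1/4) * sqrt 5" by (rule galconj_eq'[OF e q4(2) q4(2)])
  also have "\<dots> = -(tau'/2)" unfolding tau'_def by (simp add: field_simps)
  finally show ?thesis .
qed

lemma galconj_tau'2: "s \<in> {1,-1} \<Longrightarrow> galconj (s * (tau'/2)) = s * (tau/2)"
  using gt1 gt2 by auto
lemma galconj_tau2: "s \<in> {1,-1} \<Longrightarrow> galconj (s * (tau/2)) = s * (tau'/2)"
  using gt3 gt4 by auto



lemma vector_4:
 "(vector [x,y,z,w] ::('a::zero)^4)$1 = x"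
 "(vector [x,y,z,w] ::('a::zero)^4)$2 = y"
 "(vector [x,y,z,w] ::('a::zero)^4)$3 = z"
 "(vector [x,y,z,w] ::('a::zero)^4)$4 = w"
  unfolding vector_def by simp_all

abbreviation vv :: "real^4" where "vv \<equiv> vector [0, 1/2, tau'/2, tau/2]"
abbreviation ww :: "real^4" where "ww \<equiv> vector [0, 1/2, tau/2, tau'/2]"

lemma gc_half: assumes "s \<in> {1,-1}" shows "galconj (s * (1/2)) = s * (1/2)"
proof -
  from assms consider "s = 1" | "s = -1" by blast
  then show ?thesis
  proof cases
    case 1 then show ?thesis using gch by simp
  next
    case 2 then show ?thesis using gcmh by simp
  qed
qed

lemma gcv: assumes "s \<in> {1,-1}" shows "galconj (s * vv $ k) = s * ww $ k"
proof -
  have "k = 1 \<or> k = 2 \<or> k = 3 \<or> k = 4" by (rule exhaust_4)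
  then show ?thesis
  proof (elim disjE)
    assume "k = 1" then show ?thesis by (simp only: vector_4 mult_zero_right gc0)
  next
    assume "k = 2" then show ?thesis by (simp only: vector_4 gc_half[OF assms])
  next
    assume "k = 3" then show ?thesis by (simp only: vector_4 galconj_tau'2[OF assms])
  next
    assume "k = 4" then show ?thesis by (simp only: vector_4 galconj_tau2[OF assms])
  qed
qed

lemma permvec_nth[simp]: "permvec p v $ i = v $ (p i)" by (simp add: permvec_def)

definition conjv :: "real^4 \<Rightarrow> real^4" where "conjv x = (\<chi> i. galconj (x $ i))"

lemma Delta'_conjv: "Delta' = conjv ` Delta" unfolding Delta'_def conjv_def by simp

lemma gc_set: assumes "x \<in> {0, 1, -1, 1/2, -(1/2)}" shows "galconj x = x"
proof -
  from assms have "x = 0 \<or> x = 1 \<or> x = -1 \<or> x = 1/2 \<or> x = -(1/2)" by (simp only: insert_iff empty_iff simp_thms)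
  then show ?thesis
  proof (elim disjE)
    assume "x = 0" then show ?thesis using gc0 by (simp only:)
  next
    assume "x = 1" then show ?thesis using gc1 by (simp only:)
  next
    assume "x = -1" then show ?thesis using gcm1 by (simp only:)
  next
    assume "x = 1/2" then show ?thesis using gch by (simp only:)
  next
    assume "x = -(1/2)" then show ?thesis using gcmh by (simp only:)
  qed
qed

lemma conjv_fix12:
  assumes "d \<in> {x. \<exists>i s. s \<in> {1, -1} \<and> x = (\<chi> j. if j = i then s else 0)}
   \<union> {x. \<forall>i. x $ i \<in> {1/2, -1/2}}"
  shows "conjv d = d"
proof -
  have "\<forall>i. d $ i \<in> {0, 1, -1, 1/2, -(1/2)}" using assms by (auto split: if_split_asm)
  then have "\<forall>i. galconj (d $ i) = d $ i" using gc_set by blast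
  then show ?thesis unfolding conjv_def by (simp add: vec_eq_iff)
qed

lemma Delta_cases:
  assumes "d \<in> Delta"
  obtains "d \<in> {x. \<exists>i s. s \<in> {1, -1} \<and> x = (\<chi> j. if j = i then s else 0)}
   \<union> {x. \<forall>i. x $ i \<in> {1/2, -1/2}}"
  | p s where "p permutes (UNIV :: 4 set)" "evenperm p" "\<forall>i. s i \<in> {1::real, -1}"
      "d = permvec p (\<chi> i. s i * vv $ i)"
  using assms unfolding Delta_def by blast

lemma DeltaDot'_char:
  assumes "a \<in> DeltaDot'"
  obtains q s where "q permutes (UNIV :: 4 set)" "evenperm q" "\<forall>i. s i \<in> {1::real, -1}"
      "a = permvec q (\<chi> i. s i * ww $ i)"
proof -
  have aD': "a \<in> Delta'" and naD: "a \<notin> Delta" using assms unfolding DeltaDot'_def Kset_def by auto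
  then obtain d where d: "d \<in> Delta" "a = conjv d" unfolding Delta'_conjv by blast
  from d(1) show ?thesis
  proof (cases rule: Delta_cases)
    case 1
    then have "a = d" using d(2) conjv_fix12 by simp
    then show ?thesis using naD d(1) by simp
  next
    case (2 p s)
    have "a = permvec p (\<chi> i. s i * ww $ i)"
      using d(2) 2 gcv unfolding conjv_def by (simp add: vec_eq_iff)
    then show ?thesis using 2 that by blast
  qed
qed

lemma DeltaDot_char:
  assumes "a \<in> DeltaDot"
  obtains q s where "q permutes (UNIV :: 4 set)" "evenperm q" "\<forall>i. s i \<in> {1::real, -1}"
      "a = permvec q (\<chi> i. s i * vv $ i)"
proof -
  have aD: "a \<in> Delta" and naD': "a \<notin> Delta'" using assms unfolding DeltaDot_def Kset_def by auto
  from aD show ?thesis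
  proof (cases rule: Delta_cases)
    case 1
    then have "conjv a = a" using conjv_fix12 by simp
    then have "a \<in> Delta'" unfolding Delta'_conjv using aD by (metis image_eqI)
    then show ?thesis using naD' by simp
  next
    case (2 p s)
    then show ?thesis using that by blast
  qed
qed




definition Bz :: "4 \<Rightarrow> int \<times> int" where
  "Bz k = (if k = 1 then (0,0) else if k = 2 then (1,0) else if k = 3 then (1,-1) else (0,1))"

definition mulz :: "int \<times> int \<Rightarrow> int \<times> int \<Rightarrow> int \<times> int" where
  "mulz c d = (fst c* fst d + snd c* snd d, fst c* snd d + snd c* fst d + snd c* snd d)"

definition ev2 :: "int \<times> int \<Rightarrow> int \<times> int \<Rightarrow> bool" where
  "ev2 c d \<longleftrightarrow> even (fst c - fst d) \<and> even (snd c - snd d)"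

definition Cz :: "(4 \<Rightarrow> 4) \<Rightarrow> int \<times> int" where
  "Cz r = (\<Sum>j\<in>UNIV. mulz (Bz j) (Bz (r j)))"

lemma d4: "(1::4) \<noteq> 2" "(1::4) \<noteq> 3" "(1::4) \<noteq> 4" "(2::4) \<noteq> 3" "(2::4) \<noteq> 4" "(3::4) \<noteq> 4"
  by simp_all

lemma boolchain: "(E1::bool) = (A = E0) \<Longrightarrow> E2 = (B = E1) \<Longrightarrow> E3 = (C = E2) \<Longrightarrow> E3 \<Longrightarrow> E0 = (A = (B = C))"
  by auto

lemma perm_parity:
  fixes r :: "4 \<Rightarrow> 4"
  assumes r: "r permutes UNIV"
  shows "evenperm r \<longleftrightarrow> ((1 = r 1) = ((2 = Transposition.transpose 1 (r 1) (r 2)) =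
           (3 = Transposition.transpose 2 (Transposition.transpose 1 (r 1) (r 2)) (Transposition.transpose 1 (r 1) (r 3)))))"
proof -
  define r1 where "r1 = Transposition.transpose 1 (r 1) \<circ> r"
  define r2 where "r2 = Transposition.transpose 2 (r1 2) \<circ> r1"
  define r3 where "r3 = Transposition.transpose 3 (r2 3) \<circ> r2"
  have p1: "r1 permutes UNIV" unfolding r1_def by (intro permutes_compose r permutes_swap_id) auto
  have p2: "r2 permutes UNIV" unfolding r2_def by (intro permutes_compose p1 permutes_swap_id) auto
  have p3: "r3 permutes UNIV" unfolding r3_def by (intro permutes_compose p2 permutes_swap_id) auto
  have pm: "permutation r" "permutation r1" "permutation r2"
    using r p1 p2 by (auto intro: permutes_imp_permutation)
  have e1: "evenperm r1 = ((1 = r 1) = evenperm r)" unfolding r1_def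
    by (simp add: evenperm_comp pm permutation_swap_id evenperm_swap)
  have e2: "evenperm r2 = ((2 = r1 2) = evenperm r1)" unfolding r2_def
    by (simp add: evenperm_comp pm permutation_swap_id evenperm_swap)
  have e3: "evenperm r3 = ((3 = r2 3) = evenperm r2)" unfolding r3_def
    by (simp add: evenperm_comp pm permutation_swap_id evenperm_swap)
  have i1: "inj r1" "inj r2" "inj r3" using p1 p2 p3 permutes_inj by auto
  have f11: "r1 1 = 1" unfolding r1_def by simp
  have "r1 2 \<noteq> 1" using i1(1) f11 by (metis injD d4)
  then have f21: "r2 1 = 1" unfolding r2_def using f11 by (simp add: transpose_def)
  have f22: "r2 2 = 2" unfolding r2_def by simp
  have "r2 3 \<noteq> 1" "r2 3 \<noteq> 2" using i1(2) f21 f22 by (metis injD d4)+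
  then have f31: "r3 1 = 1" and f32: "r3 2 = 2" and f33: "r3 3 = 3" unfolding r3_def using f21 f22 by (auto simp add: transpose_def)
  have "r3 4 \<noteq> 1" "r3 4 \<noteq> 2" "r3 4 \<noteq> 3" using i1(3) f31 f32 f33 by (metis injD d4)+
  then have f34: "r3 4 = 4" using exhaust_4 by blast
  have "r3 = id" using f31 f32 f33 f34 by (auto simp: fun_eq_iff forall_4)
  then have "evenperm r3" by simp
  have x1: "r1 2 = Transposition.transpose 1 (r 1) (r 2)" unfolding r1_def by simp
  have x2: "r2 3 = Transposition.transpose 2 (Transposition.transpose 1 (r 1) (r 2)) (Transposition.transpose 1 (r 1) (r 3))"
    unfolding r2_def r1_def by simp
  note boolchain[OF e1 e2 e3 \<open>evenperm r3\<close>]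
  then show ?thesis unfolding x1 x2 .
qed


lemma vals_odd:
  "\<forall>a b c d::4. a \<noteq> b \<longrightarrow> a \<noteq> c \<longrightarrow> a \<noteq> d \<longrightarrow> b \<noteq> c \<longrightarrow> b \<noteq> d \<longrightarrow> c \<noteq> d \<longrightarrow>
     \<not> ((1 = a) = ((2 = Transposition.transpose 1 a b) =
           (3 = Transposition.transpose 2 (Transposition.transpose 1 a b) (Transposition.transpose 1 a c)))) \<longrightarrow>
     \<not> ev2 (mulz (Bz 1) (Bz a) + mulz (Bz 2) (Bz b) + mulz (Bz 3) (Bz c) + mulz (Bz 4) (Bz d)) (0,0)"
  unfolding forall_4 by (simp add: Bz_def mulz_def ev2_def)


lemma odd_Cz:
  assumes r: "r permutes UNIV" and o: "\<not> evenperm r"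
  shows "\<not> ev2 (Cz r) (0,0)"
proof -
  have i: "inj r" using r permutes_inj by auto
  have ne: "r 1 \<noteq> r 2" "r 1 \<noteq> r 3" "r 1 \<noteq> r 4" "r 2 \<noteq> r 3" "r 2 \<noteq> r 4" "r 3 \<noteq> r 4"
    using i d4 by (metis injD)+
  have c: "Cz r = mulz (Bz 1) (Bz (r 1)) + mulz (Bz 2) (Bz (r 2)) + mulz (Bz 3) (Bz (r 3)) + mulz (Bz 4) (Bz (r 4))"
    unfolding Cz_def sum_4 ..
  show ?thesis unfolding c using vals_odd[rule_format, OF ne] o perm_parity[OF r] by blast
qed

lemma mult_ok:
  assumes "\<not> ev2 c (0,0)"
  shows "\<exists>s. s permutes (UNIV :: 4 set) \<and> evenperm s \<and> (\<forall>k. ev2 (mulz c (Bz k)) (Bz (s k)))"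
proof -
  obtain a b where ab: "c = (a, b)" by (cases c)
  have nz: "odd a \<or> odd b" using assms ab by (simp add: ev2_def)
  have pt: "\<And>x y. Transposition.transpose x y permutes (UNIV :: 4 set)" by (rule permutes_swap_id) auto
  consider "odd a" "even b" | "even a" "odd b" | "odd a" "odd b" using nz by blast
  then show ?thesis
  proof cases
    case 1
    have "\<forall>k. ev2 (mulz c (Bz k)) (Bz (id k))" unfolding forall_4 using 1
      by (simp add: ab Bz_def mulz_def ev2_def)
    then show ?thesis by (intro exI[of _ id]) (simp add: permutes_id)
  next
    case 2
    let ?s = "Transposition.transpose (3::4) 4 \<circ> Transposition.transpose 2 3"
    have "\<forall>k. ev2 (mulz c (Bz k)) (Bz (?s k))" unfolding forall_4 using 2
      by (simp add: ab Bz_def mulz_def ev2_def)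
    moreover have "?s permutes UNIV" by (intro permutes_compose pt)
    moreover have "evenperm ?s"
      by (simp add: evenperm_comp permutation_swap_id evenperm_swap)
    ultimately show ?thesis by blast
  next
    case 3
    let ?s = "Transposition.transpose (2::4) 3 \<circ> Transposition.transpose 3 4"
    have "\<forall>k. ev2 (mulz c (Bz k)) (Bz (?s k))" unfolding forall_4 using 3
      by (simp add: ab Bz_def mulz_def ev2_def)
    moreover have "?s permutes UNIV" by (intro permutes_compose pt)
    moreover have "evenperm ?s"
      by (simp add: evenperm_comp permutation_swap_id evenperm_swap)
    ultimately show ?thesis by blast
  qed
qed




definition zt :: "int \<times> int \<Rightarrow> real" where "zt c = of_int (fst c) + of_int (snd c) * tau"

lemma tau_sq: "tau * tau = tau + 1"
proof -
  have "sqrt 5 * sqrt 5 = (5::real)" by simp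
  then show ?thesis unfolding tau_def by (simp add: field_simps)
qed

lemma zt_mul: "zt c * zt d = zt (mulz c d)"
proof -
  have "zt c * zt d = of_int (fst c) * of_int (fst d) + (of_int (fst c) * of_int (snd d) + of_int (snd c) * of_int (fst d)) * tau
     + of_int (snd c) * of_int (snd d) * (tau * tau)" unfolding zt_def by (simp add: algebra_simps)
  also have "\<dots> = zt (mulz c d)" unfolding tau_sq zt_def mulz_def by (simp add: algebra_simps)
  finally show ?thesis .
qed

lemma zt_add: "zt (c + d) = zt c + zt d" unfolding zt_def by (simp add: algebra_simps)
lemma zt_diff: "zt (c - d) = zt c - zt d" unfolding zt_def by (simp add: algebra_simps)
lemma zt_zero: "zt 0 = 0" unfolding zt_def by simp
lemma zt_scal: "zt (mulz (n, 0) x) = of_int n * zt x" unfolding zt_def mulz_def by (simp add: algebra_simps)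

lemma zt_sum: "zt (sum f A) = (\<Sum>i\<in>A. zt (f i))"
  by (induct A rule: infinite_finite_induct) (auto simp: zt_add zt_zero)

lemma baseA_zt: "baseA $ k = zt (Bz k)"
proof -
  have t': "tau' = 1 - tau" unfolding tau_def tau'_def by (simp add: field_simps)
  have "k = 1 \<or> k = 2 \<or> k = 3 \<or> k = 4" by (rule exhaust_4)
  then show ?thesis unfolding baseA_def Bz_def zt_def vector_def using t' by auto
qed

lemma Ztau_zt: "x \<in> Ztau \<longleftrightarrow> (\<exists>c. x = zt c)"
  unfolding Ztau_def zt_def by auto

lemma cong2_zt: assumes "ev2 c d" shows "cong2 (zt c) (zt d)"
proof -
  have "even (fst c - fst d)" using assms unfolding ev2_def by blast
  then obtain k1 where k1: "fst c - fst d = 2 * k1" by (rule evenE)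
  have "even (snd c - snd d)" using assms unfolding ev2_def by blast
  then obtain k2 where k2: "snd c - snd d = 2 * k2" by (rule evenE)
  have "zt c - zt d = 2 * zt (k1, k2)"
  proof -
    have "zt c - zt d = of_int (fst c - fst d) + of_int (snd c - snd d) * tau" unfolding zt_def by (simp add: algebra_simps)
    also have "\<dots> = 2 * zt (k1, k2)" unfolding k1 k2 zt_def by (simp add: algebra_simps)
    finally show ?thesis .
  qed
  moreover have "zt (k1, k2) \<in> Ztau" "zt c \<in> Ztau" "zt d \<in> Ztau" unfolding Ztau_zt by blast+
  ultimately show ?thesis unfolding cong2_def by blast
qed

lemma cong2_ex: assumes "cong2 x (zt d)" shows "\<exists>e. x = zt (d + e + e)"
proof -
  obtain z where z: "z \<in> Ztau" "x - zt d = 2 * z" using assms unfolding cong2_def by blast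
  obtain e where "z = zt e" using z(1) Ztau_zt by blast
  then have "x = zt (d + e + e)" using z(2) by (simp add: zt_add)
  then show ?thesis ..
qed

lemma ev2_refl: "ev2 c c" unfolding ev2_def by simp
lemma ev2_iff: "ev2 c d \<longleftrightarrow> (\<exists>e. c = d + e + e)"
proof
  assume a: "ev2 c d"
  have "even (fst c - fst d)" using a unfolding ev2_def by blast
  then obtain k1 where k1: "fst c - fst d = 2 * k1" by (rule evenE)
  have "even (snd c - snd d)" using a unfolding ev2_def by blast
  then obtain k2 where k2: "snd c - snd d = 2 * k2" by (rule evenE)
  have "c = d + (k1,k2) + (k1,k2)" using k1 k2 by (cases c, cases d) auto
  then show "\<exists>e. c = d + e + e" ..
next
  assume "\<exists>e. c = d + e + e"
  then obtain e where "c = d + e + e" ..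
  then show "ev2 c d" unfolding ev2_def by (cases c, cases d, cases e) auto
qed
lemma ev2_sym: "ev2 c d \<Longrightarrow> ev2 d c"
proof -
  assume "ev2 c d"
  then obtain e where "c = d + e + e" unfolding ev2_iff by blast
  then have "d = c + (-e) + (-e)" by (simp add: algebra_simps)
  then show ?thesis unfolding ev2_iff by blast
qed
lemma ev2_trans: "ev2 c d \<Longrightarrow> ev2 d f \<Longrightarrow> ev2 c f"
proof -
  assume "ev2 c d" "ev2 d f"
  then obtain e1 e2 where "c = d + e1 + e1" "d = f + e2 + e2" unfolding ev2_iff by blast
  then have "c = f + (e1 + e2) + (e1 + e2)" by (simp add: algebra_simps)
  then show ?thesis unfolding ev2_iff by blast
qed
lemma ev2_add: "ev2 c c' \<Longrightarrow> ev2 d d' \<Longrightarrow> ev2 (c + d) (c' + d')"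
proof -
  assume "ev2 c c'" "ev2 d d'"
  then obtain e1 e2 where "c = c' + e1 + e1" "d = d' + e2 + e2" unfolding ev2_iff by blast
  then have "c + d = (c' + d') + (e1 + e2) + (e1 + e2)" by (simp add: algebra_simps)
  then show ?thesis unfolding ev2_iff by blast
qed
lemma ev2_mul: assumes "ev2 c c'" "ev2 d d'" shows "ev2 (mulz c d) (mulz c' d')"
proof -
  obtain e f where ef: "c = c' + e + e" "d = d' + f + f" using assms unfolding ev2_iff by blast
  let ?g = "mulz c' f + mulz e d' + mulz e f + mulz e f"
  have "mulz c d = mulz c' d' + ?g + ?g" unfolding ef
    by (cases c', cases d', cases e, cases f) (simp add: mulz_def algebra_simps)
  then show ?thesis unfolding ev2_iff by blast
qed
lemma ev2_sum: "(\<And>i. i \<in> A \<Longrightarrow> ev2 (f i) (g i)) \<Longrightarrow> ev2 (sum f A) (sum g A)"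
  by (induct A rule: infinite_finite_induct) (auto simp: ev2_refl ev2_add)
lemma ev2_dm: "ev2 (c + c - x) x" unfolding ev2_def by (cases c, cases x) simp
lemma ev2_sgn: "n \<in> {1,-1} \<Longrightarrow> ev2 (mulz (n,0) x) x" unfolding ev2_def mulz_def by (cases x) auto




lemma core:
  fixes y a :: "real^4" and p q u :: "4 \<Rightarrow> 4" and s :: "4 \<Rightarrow> real"
  assumes pp: "p permutes UNIV" and qp: "q permutes UNIV" and up: "u permutes UNIV"
    and par: "evenperm (u \<circ> q) \<noteq> evenperm p"
    and sv: "\<forall>i. s i \<in> {1,-1}"
    and yc: "\<forall>i. cong2 (y$i) (baseA $ (p i))"
    and ad: "a = permvec q (\<chi> i. s i * (baseA $ (u i) / 2))"
  shows "\<exists>p'. p' permutes UNIV \<and> (evenperm p' \<longleftrightarrow> \<not> evenperm p) \<and>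
            (\<forall>i. cong2 (2 * y$i - 4 * (y \<bullet> a) * a$i) (baseA $ (p' i)))"
proof -
  have "\<forall>i. \<exists>e. y$i = zt (Bz (p i) + e + e)" using yc cong2_ex unfolding baseA_zt by blast
  then obtain W where W: "\<forall>i. y$i = zt (Bz (p i) + W i + W i)" by (metis choice)
  have "\<forall>i. \<exists>n. s i = of_int n \<and> n \<in> {1,-1}"
  proof
    fix i show "\<exists>n. s i = of_int n \<and> n \<in> {1,-1}"
    proof (cases "s i = 1")
      case True then show ?thesis by (intro exI[of _ 1]) simp
    next
      case False then have "s i = -1" using sv by blast
      then show ?thesis by (intro exI[of _ "-1"]) simp
    qed
  qed
  then obtain S where S: "\<forall>i. s i = of_int (S i) \<and> S i \<in> {1,-1}" by (metis choice)
  define Y where "Y i = Bz (p i) + W i + W i" for i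
  define Bb where "Bb i = mulz (S (q i), 0) (Bz (u (q i)))" for i
  define T where "T = (\<Sum>i\<in>UNIV. mulz (Y i) (Bb i))"
  have yY: "y$i = zt (Y i)" for i using W Y_def by simp
  have aB: "2 * a$i = zt (Bb i)" for i
    unfolding ad Bb_def zt_scal using S by (simp add: baseA_zt permvec_def)
  have ya: "2 * (y \<bullet> a) = zt T"
  proof -
    have "2 * (y \<bullet> a) = (\<Sum>i\<in>UNIV. y$i * (2 * a$i))"
      unfolding inner_vec_def inner_real_def by (simp add: sum_distrib_left algebra_simps)
    also have "\<dots> = (\<Sum>i\<in>UNIV. zt (mulz (Y i) (Bb i)))" unfolding yY aB zt_mul ..
    also have "\<dots> = zt T" unfolding T_def zt_sum ..
    finally show ?thesis .
  qed
  have res: "2 * y$i - 4 * (y \<bullet> a) * a$i = zt (Y i + Y i - mulz T (Bb i))" for i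
  proof -
    have "2 * y$i - 4 * (y \<bullet> a) * a$i = 2 * y$i - (2 * (y \<bullet> a)) * (2 * a$i)" by simp
    also have "\<dots> = zt (Y i + Y i - mulz T (Bb i))" unfolding ya aB yY zt_mul zt_diff zt_add by simp
    finally show ?thesis .
  qed
  define r where "r = u \<circ> q \<circ> inv p"
  have ip: "inv p permutes UNIV" using pp by (rule permutes_inv)
  have rp: "r permutes UNIV" unfolding r_def by (intro permutes_compose up qp ip)
  have pmu: "permutation (u \<circ> q)" "permutation (inv p)" "permutation p"
    using up qp ip pp by (auto intro: permutes_imp_permutation permutes_compose)
  have ro: "\<not> evenperm r" unfolding r_def using par
    by (simp add: evenperm_comp pmu evenperm_inv)
  have czr: "Cz r = (\<Sum>i\<in>UNIV. mulz (Bz (p i)) (Bz (u (q i))))"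
  proof -
    have "Cz r = (\<Sum>i\<in>UNIV. (\<lambda>j. mulz (Bz j) (Bz (r j))) (p i))"
      unfolding Cz_def using sum.permute[OF pp, of "\<lambda>j. mulz (Bz j) (Bz (r j))"] by (simp add: comp_def)
    also have "\<dots> = (\<Sum>i\<in>UNIV. mulz (Bz (p i)) (Bz (u (q i))))"
      unfolding r_def using permutes_inverses(2)[OF pp] by simp
    finally show ?thesis .
  qed
  have TC: "ev2 T (Cz r)" unfolding T_def czr
  proof (rule ev2_sum)
    fix i
    have "ev2 (Y i) (Bz (p i))" unfolding Y_def ev2_iff by blast
    moreover have "ev2 (Bb i) (Bz (u (q i)))" unfolding Bb_def using S ev2_sgn by blast
    ultimately show "ev2 (mulz (Y i) (Bb i)) (mulz (Bz (p i)) (Bz (u (q i))))" by (rule ev2_mul)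
  qed
  obtain sg where sg: "sg permutes (UNIV :: 4 set)" "evenperm sg" "\<forall>k. ev2 (mulz (Cz r) (Bz k)) (Bz (sg k))"
    using mult_ok[OF odd_Cz[OF rp ro]] by blast
  define p' where "p' = sg \<circ> (u \<circ> q)"
  have p'p: "p' permutes UNIV" unfolding p'_def by (intro permutes_compose sg(1) up qp)
  have p'e: "evenperm p' \<longleftrightarrow> \<not> evenperm p" unfolding p'_def using par sg(2)
    by (simp add: evenperm_comp pmu permutes_imp_permutation[OF _ sg(1)])
  have "cong2 (2 * y$i - 4 * (y \<bullet> a) * a$i) (baseA $ (p' i))" for i
  proof -
    have "ev2 (Y i + Y i - mulz T (Bb i)) (mulz T (Bb i))" by (rule ev2_dm)
    moreover have "ev2 (mulz T (Bb i)) (mulz (Cz r) (Bz (u (q i))))"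
      using ev2_mul[OF TC] ev2_sgn S unfolding Bb_def by blast
    moreover have "ev2 (mulz (Cz r) (Bz (u (q i)))) (Bz (p' i))" using sg(3) unfolding p'_def by simp
    ultimately have "ev2 (Y i + Y i - mulz T (Bb i)) (Bz (p' i))" by (metis ev2_trans)
    then show ?thesis unfolding res baseA_zt by (rule cong2_zt)
  qed
  then show ?thesis using p'p p'e by blast
qed




lemma sumsq_baseA: "(\<Sum>k\<in>UNIV. (baseA $ k)^2) = 4"
proof -
  have "(\<Sum>k\<in>UNIV. (baseA $ k)^2) = 0 + 1 + tau'^2 + tau^2" unfolding sum_4 baseA_def by (simp add: vector_4)
  also have "\<dots> = 4" unfolding tau_def tau'_def by (simp add: field_simps power2_eq_square)
  finally show ?thesis .
qed

lemma a_unit: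
  fixes q u :: "4 \<Rightarrow> 4"
  assumes qp: "q permutes UNIV" and up: "u permutes UNIV" and sv: "\<forall>i. s i \<in> {1::real,-1}"
    and ad: "a = permvec q (\<chi> i. s i * (baseA $ (u i) / 2))"
  shows "a \<bullet> a = 1"
proof -
  have s2: "s i * s i = 1" for i using sv by (cases "s i = 1") auto
  have "a \<bullet> a = (\<Sum>i\<in>UNIV. (baseA $ ((u \<circ> q) i))^2 / 4)"
    unfolding ad inner_vec_def inner_real_def
    by (rule sum.cong) (simp_all add: power2_eq_square algebra_simps s2)
  also have "\<dots> = (\<Sum>k\<in>UNIV. (baseA $ k)^2 / 4)"
    using sum.permute[OF permutes_compose[OF qp up], of "\<lambda>k. (baseA $ k)^2 / 4"] by (simp add: comp_def)
  also have "\<dots> = 1" using sumsq_baseA by (simp add: sum_divide_distrib[symmetric])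
  finally show ?thesis .
qed

lemma refl_norm: "a \<bullet> a = 1 \<Longrightarrow> reflect a x \<bullet> reflect a x = x \<bullet> x"
  unfolding reflect_def by (simp add: inner_diff_left inner_diff_right inner_commute algebra_simps power2_eq_square)

lemma step:
  fixes q u p :: "4 \<Rightarrow> 4"
  assumes qp: "q permutes UNIV" and up: "u permutes UNIV" and sv: "\<forall>i. s i \<in> {1::real,-1}"
    and ad: "a = permvec q (\<chi> i. s i * (baseA $ (u i) / 2))"
    and pp: "p permutes UNIV" and par: "evenperm (u \<circ> q) \<noteq> evenperm p"
    and xx: "x \<bullet> x = 1"
    and xc: "\<forall>i. cong2 (((2::real)^n *\<^sub>R x) $ i) (permvec p baseA $ i)"
  shows "(\<forall>i. (2::real)^(n+1) * reflect a x $ i \<in> Ztau) \<and> reflect a x \<bullet> reflect a x = 1 \<and>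
    (\<exists>p'. p' permutes UNIV \<and> (evenperm p' \<longleftrightarrow> \<not> evenperm p) \<and>
       (\<forall>i. cong2 (((2::real)^(n+1) *\<^sub>R reflect a x) $ i) (permvec p' baseA $ i)))"
proof -
  define y where "y = (2::real)^n *\<^sub>R x"
  have yc: "\<forall>i. cong2 (y$i) (baseA $ (p i))" using xc unfolding y_def by (simp add: permvec_def)
  obtain p' where p': "p' permutes UNIV" "evenperm p' \<longleftrightarrow> \<not> evenperm p"
     "\<forall>i. cong2 (2 * y$i - 4 * (y \<bullet> a) * a$i) (baseA $ (p' i))"
    using core[OF pp qp up par sv yc ad] by blast
  have eq: "((2::real)^(n+1) *\<^sub>R reflect a x) $ i = 2 * y$i - 4 * (y \<bullet> a) * a$i" for i
    unfolding y_def reflect_def by (simp add: algebra_simps)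
  have c: "\<forall>i. cong2 (((2::real)^(n+1) *\<^sub>R reflect a x) $ i) (permvec p' baseA $ i)"
    using p'(3) unfolding eq by (simp add: permvec_def)
  have "\<forall>i. (2::real)^(n+1) * reflect a x $ i \<in> Ztau" using c unfolding cong2_def by simp
  moreover have "reflect a x \<bullet> reflect a x = 1" using refl_norm[OF a_unit[OF qp up sv ad]] xx by simp
  ultimately show ?thesis using c p'(1,2) by blast
qed

lemma ww_baseA: "(\<chi> i. s i * ww $ i) = (\<chi> i. s i * (baseA $ (Transposition.transpose 3 4 i) / 2))"
proof -
  have "ww $ i = baseA $ (Transposition.transpose 3 4 i) / 2" for i
  proof -
    have "i = 1 \<or> i = 2 \<or> i = 3 \<or> i = 4" by (rule exhaust_4)
    then show ?thesis unfolding baseA_def by (auto simp: vector_4)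
  qed
  then show ?thesis by (simp only:)
qed

lemma vv_baseA: "(\<chi> i. s i * vv $ i) = (\<chi> i. s i * (baseA $ (id i) / 2))"
proof -
  have "vv $ i = baseA $ i / 2" for i
  proof -
    have "i = 1 \<or> i = 2 \<or> i = 3 \<or> i = 4" by (rule exhaust_4)
    then show ?thesis unfolding baseA_def by (auto simp: vector_4)
  qed
  then show ?thesis by (simp only: id_apply)
qed

theorem mainTheorem2:
  fixes n :: nat
  assumes "n \<ge> 1"
  shows "(\<forall>a'\<in>DeltaDot'. reflect a' ` Sdot n \<subseteq> Sdot' (n + 1)) \<and>
         (\<forall>a\<in>DeltaDot. reflect a ` Sdot' n \<subseteq> Sdot (n + 1))"
proof (intro conjI ballI subsetI)
  fix a' z assume a': "a' \<in> DeltaDot'" and z: "z \<in> reflect a' ` Sdot n"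
  then obtain x where x: "x \<in> Sdot n" "z = reflect a' x" by blast
  obtain q s where qs: "q permutes (UNIV :: 4 set)" "evenperm q" "\<forall>i. s i \<in> {1::real, -1}"
      "a' = permvec q (\<chi> i. s i * ww $ i)" using DeltaDot'_char[OF a'] by blast
  let ?t = "Transposition.transpose (3::4) 4"
  have tp: "?t permutes UNIV" by (rule permutes_swap_id) auto
  obtain p where p: "p permutes UNIV" "evenperm p" "\<forall>i. cong2 (((2::real)^n *\<^sub>R x) $ i) (permvec p baseA $ i)"
    using x(1) unfolding Sdot_def inAdot_def by blast
  have par: "evenperm (?t \<circ> q) \<noteq> evenperm p" using p(2) qs(2)
    by (simp add: evenperm_comp permutation_swap_id evenperm_swap permutes_imp_permutation[OF _ qs(1)])
  have xx: "x \<bullet> x = 1" using x(1) unfolding Sdot_def by blast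
  from step[OF qs(1) tp qs(3) qs(4)[unfolded ww_baseA] p(1) par xx p(3)] p(2)
  show "z \<in> Sdot' (n + 1)" unfolding Sdot'_def inAdot'_def x(2) by blast
next
  fix a z assume a: "a \<in> DeltaDot" and z: "z \<in> reflect a ` Sdot' n"
  then obtain x where x: "x \<in> Sdot' n" "z = reflect a x" by blast
  obtain q s where qs: "q permutes (UNIV :: 4 set)" "evenperm q" "\<forall>i. s i \<in> {1::real, -1}"
      "a = permvec q (\<chi> i. s i * vv $ i)" using DeltaDot_char[OF a] by blast
  have tp: "id permutes (UNIV :: 4 set)" by (rule permutes_id)
  obtain p where p: "p permutes UNIV" "\<not> evenperm p" "\<forall>i. cong2 (((2::real)^n *\<^sub>R x) $ i) (permvec p baseA $ i)"
    using x(1) unfolding Sdot'_def inAdot'_def by blast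
  have par: "evenperm (id \<circ> q) \<noteq> evenperm p" using p(2) qs(2) by simp
  have xx: "x \<bullet> x = 1" using x(1) unfolding Sdot'_def by blast
  from step[OF qs(1) tp qs(3) qs(4)[unfolded vv_baseA] p(1) par xx p(3)] p(2)
  show "z \<in> Sdot (n + 1)" unfolding Sdot_def inAdot_def x(2) by blast
qed



end
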